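(* Let $\Omega\subset\mathbb{R}^2$ have property (i). Then: 1. $\Omega$ has property $( * )$ if and only if $\Omega^\diamond$ has property $( ** )$. 2. $\Omega^\diamond$ has property $( * )$ if and only if $\Omega$ has property $( ** )$.
   Context: Points of $\mathbb{R}^2$ are written $(x,y)$, points of the dual $\mathbb{R}^{2*}$ as $(p,q)$. The antipolar of $\Omega\subset\mathbb{R}^2$ is $\Omega^\diamond=\{(p,q)\in\mathbb{R}^{2*}: px-qy\ge1\ \forall(x,y)\in\Omega\}$. For a set $\Sigma$ (in $\mathbb{R}^2$ or in $\mathbb{R}^{2*}$): property (i): $\Sigma$ is nonempty, convex, closed, $0\notin\Sigma$, and $\lambda\Sigma\subset\Sigma$ for all $\lambda>1$. Property $( * )$: $\lambda\Sigma\cap\partial\Sigma=\varnothing$ for all $\lambda>1$ (no ray issued from the origin lies on $\partial\Sigma$). Property $( ** )$: letting $C=\operatorname{cl}(\mathbb{R}_+\Sigma)$ with $\mathbb{R}_+=[0,\infty)$, and $\partial C=l_0\cup l_1$ with $l_0,l_1$ the two (possibly coinciding) boundary rays of the closed cone $C$, one has $\operatorname{dist}(l_0,\Sigma)=\operatorname{dist}(l_1,\Sigma)=0$. *)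

theory Defs
  imports "HOL-Analysis.Analysis"
begin

text \<open>Points of R^2 and of its dual are both modelled as real \<times> real.\<close>

definition antipolar :: "(real \<times> real) set \<Rightarrow> (real \<times> real) set" where
  "antipolar \<Omega> = {(p, q). \<forall>(x, y) \<in> \<Omega>. p * x - q * y \<ge> 1}"

definition prop_i :: "(real \<times> real) set \<Rightarrow> bool" where
  "prop_i \<Sigma> \<longleftrightarrow> \<Sigma> \<noteq> {} \<and> convex \<Sigma> \<and> closed \<Sigma> \<and> 0 \<notin> \<Sigma> \<and>
     (\<forall>c::real. c > 1 \<longrightarrow> (\<lambda>x. c *\<^sub>R x) ` \<Sigma> \<subseteq> \<Sigma>)"

definition prop_star :: "(real \<times> real) set \<Rightarrow> bool" where
  "prop_star \<Sigma> \<longleftrightarrow> (\<forall>c::real. c > 1 \<longrightarrow> (\<lambda>x. c *\<^sub>R x) ` \<Sigma> \<inter> frontier \<Sigma> = {})"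

definition ray :: "real \<times> real \<Rightarrow> (real \<times> real) set" where
  "ray u = (\<lambda>t. t *\<^sub>R u) ` {0..}"

definition cone_cl :: "(real \<times> real) set \<Rightarrow> (real \<times> real) set" where
  "cone_cl \<Sigma> = closure {t *\<^sub>R x | t x. t \<ge> 0 \<and> x \<in> \<Sigma>}"

definition prop_starstar :: "(real \<times> real) set \<Rightarrow> bool" where
  "prop_starstar \<Sigma> \<longleftrightarrow> (\<exists>u0 u1. u0 \<noteq> 0 \<and> u1 \<noteq> 0 \<and>
      frontier (cone_cl \<Sigma>) = ray u0 \<union> ray u1 \<and>
      setdist (ray u0) \<Sigma> = 0 \<and> setdist (ray u1) \<Sigma> = 0)"

end

theory Submission
  imports Defs
begin

definition pairing :: "real \<times> real \<Rightarrow> real \<times> real \<Rightarrow> real" where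
  "pairing u v = fst u * fst v - snd u * snd v"

definition Jm :: "real \<times> real \<Rightarrow> real \<times> real" where
  "Jm u = (fst u, - snd u)"

definition dualK :: "(real \<times> real) set \<Rightarrow> (real \<times> real) set" where
  "dualK A = {\<xi>. \<forall>z\<in>A. pairing \<xi> z \<ge> 0}"

lemma inner2: "(u::real\<times>real) \<bullet> v = fst u * fst v + snd u * snd v"
  by (simp add: inner_prod_def)

lemma pairing_J: "pairing \<xi> z = Jm \<xi> \<bullet> z" "pairing \<xi> z = \<xi> \<bullet> Jm z"
  by (simp_all add: pairing_def Jm_def inner2)

lemma pairing_sym: "pairing u v = pairing v u"
  by (simp add: pairing_def mult.commute)

lemma Jm_Jm [simp]: "Jm (Jm u) = u"
  by (simp add: Jm_def)

lemma Jm_eq0 [simp]: "Jm u = 0 \<longleftrightarrow> u = 0"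
  by (cases u) (simp add: Jm_def zero_prod_def)

lemma norm_Jm [simp]: "norm (Jm u) = norm u"
  by (cases u) (simp add: Jm_def norm_Pair)

lemma pairing_lin:
  "pairing (u + v) z = pairing u z + pairing v z"
  "pairing (u - v) z = pairing u z - pairing v z"
  "pairing (c *\<^sub>R u) z = c * pairing u z"
  "pairing z (u + v) = pairing z u + pairing z v"
  "pairing z (u - v) = pairing z u - pairing z v"
  "pairing z (c *\<^sub>R u) = c * pairing z u"
  "pairing 0 z = 0" "pairing z 0 = 0"
  by (simp_all add: pairing_def algebra_simps)

lemma pairing_Jself: "pairing (Jm z) z = norm z ^ 2" "pairing z (Jm z) = norm z ^ 2"
  by (simp_all add: pairing_def Jm_def power2_norm_eq_inner inner2)

lemma abs_pairing_le: "\<bar>pairing v z\<bar> \<le> norm v * norm z"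
  using Cauchy_Schwarz_ineq2[of "Jm v" z] by (simp add: pairing_J)

lemma antipolar_iff: "\<xi> \<in> antipolar A \<longleftrightarrow> (\<forall>z\<in>A. 1 \<le> pairing \<xi> z)"
  by (cases \<xi>) (auto simp: antipolar_def pairing_def)

lemma prop_iD:
  assumes "prop_i A"
  shows "A \<noteq> {}" "convex A" "closed A" "0 \<notin> A" "\<And>c x. c > 1 \<Longrightarrow> x \<in> A \<Longrightarrow> c *\<^sub>R x \<in> A"
  using assms unfolding prop_i_def by auto

lemma scale_nonneg:
  fixes L r :: real
  assumes "\<And>c. c > 1 \<Longrightarrow> L \<le> c * r"
  shows "r \<ge> 0"
proof (rule ccontr)
  assume "\<not> r \<ge> 0"
  hence r: "r < 0" by simp
  define c where "c = 1 + (\<bar>L\<bar> + 1) / (- r)"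
  have "(\<bar>L\<bar> + 1) / (- r) > 0" using r by (intro divide_pos_pos) auto
  hence "c > 1" by (simp add: c_def)
  have "c * r = r - (\<bar>L\<bar> + 1)" using r by (simp add: c_def field_simps)
  hence "c * r < L" using r by linarith
  with assms[OF \<open>c > 1\<close>] show False by simp
qed

lemma antipolar_nonempty:
  assumes "prop_i A" shows "antipolar A \<noteq> {}"
proof -
  obtain a b where ab: "a \<noteq> 0" "0 < b" "\<forall>x\<in>A. a \<bullet> x > b"
    using separating_hyperplane_closed_0[OF prop_iD(2,3,4)[OF assms]] by blast
  have "(1/b) *\<^sub>R Jm a \<in> antipolar A"
  proof (unfold antipolar_iff, intro ballI)
    fix z assume "z \<in> A"
    have "pairing ((1/b) *\<^sub>R Jm a) z = (a \<bullet> z) / b"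
      by (simp add: pairing_def Jm_def inner2 add_divide_distrib)
    also have "\<dots> \<ge> 1"
    proof -
      have "b < a \<bullet> z" using ab \<open>z \<in> A\<close> by blast
      thus ?thesis using ab(2) by (simp add: field_simps)
    qed
    finally show "1 \<le> pairing ((1/b) *\<^sub>R Jm a) z" .
  qed
  thus ?thesis by blast
qed

lemma antipolar_closed: "closed (antipolar A)"
proof -
  have "antipolar A = (\<Inter>z\<in>A. {\<xi>. (\<lambda>_. 1) \<xi> \<le> (\<lambda>\<xi>. pairing \<xi> z) \<xi>})"
    by (auto simp: antipolar_iff)
  moreover have "closed {\<xi>. (\<lambda>_. 1::real) \<xi> \<le> (\<lambda>\<xi>. pairing \<xi> z) \<xi>}" for z
  proof -
    have "continuous_on UNIV (\<lambda>\<xi>. pairing \<xi> z)" unfolding pairing_def by (intro continuous_intros)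
    from closed_Collect_le[OF continuous_on_const this] show ?thesis by simp
  qed
  ultimately show ?thesis by auto
qed

lemma antipolar_prop_i:
  assumes "prop_i A" shows "prop_i (antipolar A)"
  unfolding prop_i_def
proof (intro conjI allI impI)
  show "antipolar A \<noteq> {}" by (rule antipolar_nonempty[OF assms])
  show "closed (antipolar A)" by (rule antipolar_closed)
  show "convex (antipolar A)"
  proof (rule convexI)
    fix x y and u v :: real
    assume x': "x \<in> antipolar A" and y': "y \<in> antipolar A"
      and uv: "0 \<le> u" "0 \<le> v" "u + v = 1"
    show "u *\<^sub>R x + v *\<^sub>R y \<in> antipolar A" unfolding antipolar_iff
    proof
    fix z assume z: "z \<in> A"
    have x: "\<forall>z\<in>A. 1 \<le> pairing x z" and y: "\<forall>z\<in>A. 1 \<le> pairing y z"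
      using x' y' by (auto simp: antipolar_iff)
    have "u * 1 \<le> u * pairing x z" using x z uv by (intro mult_left_mono) auto
    moreover have "v * 1 \<le> v * pairing y z" using y z uv by (intro mult_left_mono) auto
    moreover have "pairing (u *\<^sub>R x + v *\<^sub>R y) z = u * pairing x z + v * pairing y z"
      by (simp add: pairing_lin)
    ultimately show "1 \<le> pairing (u *\<^sub>R x + v *\<^sub>R y) z"
      using uv by linarith
  qed
  qed
  obtain z0 where "z0 \<in> A" using prop_iD(1)[OF assms] by blast
  then show "0 \<notin> antipolar A" unfolding antipolar_iff pairing_lin(7) by fastforce
  fix c :: real assume "c > 1"
  show "(\<lambda>x. c *\<^sub>R x) ` antipolar A \<subseteq> antipolar A"
  proof (intro subsetI)
    fix x assume "x \<in> (\<lambda>x. c *\<^sub>R x) ` antipolar A"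
    then obtain \<xi> where x: "x = c *\<^sub>R \<xi>" and xi: "\<xi> \<in> antipolar A" by blast
    show "x \<in> antipolar A" unfolding antipolar_iff
    proof
      fix z assume "z \<in> A"
      hence "1 \<le> pairing \<xi> z" using xi by (simp add: antipolar_iff)
      have "1 * 1 \<le> c * pairing \<xi> z" using \<open>c > 1\<close> \<open>1 \<le> pairing \<xi> z\<close> by (intro mult_mono) auto
      thus "1 \<le> pairing x z" by (simp add: x pairing_lin)
    qed
  qed
qed

lemma pairing_Jm_left [simp]: "pairing (Jm a) w = a \<bullet> w"
  by (simp add: pairing_J(1))

lemma pairing_Jm_right [simp]: "pairing w (Jm a) = w \<bullet> a"
  by (simp add: pairing_J(2))

lemma bipolar:
  assumes A: "prop_i A" shows "antipolar (antipolar A) = A"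
proof
  show "A \<subseteq> antipolar (antipolar A)"
    by (auto simp: antipolar_iff pairing_sym)
  show "antipolar (antipolar A) \<subseteq> A"
  proof
    fix z assume zz: "z \<in> antipolar (antipolar A)"
    show "z \<in> A"
    proof (rule ccontr)
      assume "z \<notin> A"
      then obtain a b where ab: "a \<bullet> z < b" "\<forall>x\<in>A. b < a \<bullet> x"
        using separating_hyperplane_closed_point[OF prop_iD(2,3)[OF A]] by blast
      have nn: "a \<bullet> w \<ge> 0" if w: "w \<in> A" for w
      proof (rule scale_nonneg[of b])
        fix c :: real assume "c > 1"
        hence "c *\<^sub>R w \<in> A" using prop_iD(5)[OF A] w by blast
        hence "b < a \<bullet> (c *\<^sub>R w)" using ab by blast
        thus "b \<le> c * (a \<bullet> w)" by simp
      qed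
      obtain \<xi> where xi: "\<xi> \<in> antipolar A" "pairing \<xi> z < 1"
      proof (cases "b > 0")
        case True
        have "(1/b) *\<^sub>R Jm a \<in> antipolar A" unfolding antipolar_iff
        proof
          fix w assume "w \<in> A"
          hence "b < a \<bullet> w" using ab by blast
          thus "1 \<le> pairing ((1/b) *\<^sub>R Jm a) w" using True by (simp add: pairing_lin field_simps)
        qed
        moreover have "pairing ((1/b) *\<^sub>R Jm a) z < 1" using True ab(1) by (simp add: pairing_lin field_simps)
        ultimately show ?thesis using that by blast
      next
        case False
        obtain \<eta> where eta: "\<eta> \<in> antipolar A" using antipolar_nonempty[OF A] by blast
        have az: "a \<bullet> z < 0" using False ab(1) by simp
        define s where "s = (\<bar>pairing \<eta> z\<bar> + 1) / (- (a \<bullet> z))"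
        have s: "s > 0" unfolding s_def using az by (intro divide_pos_pos) auto
        have "\<eta> + s *\<^sub>R Jm a \<in> antipolar A" unfolding antipolar_iff
        proof
          fix w assume "w \<in> A"
          hence "1 \<le> pairing \<eta> w" "0 \<le> s * (a \<bullet> w)" using eta nn s by (auto simp: antipolar_iff)
          thus "1 \<le> pairing (\<eta> + s *\<^sub>R Jm a) w" by (simp add: pairing_lin)
        qed
        moreover have "s * (a \<bullet> z) = - (\<bar>pairing \<eta> z\<bar> + 1)" unfolding s_def using az by (simp add: field_simps)
        hence "pairing (\<eta> + s *\<^sub>R Jm a) z < 1" by (simp add: pairing_lin)
        ultimately show ?thesis using that by blast
      qed
      moreover have "1 \<le> pairing z \<xi>" using zz xi(1) by (simp add: antipolar_iff)
      ultimately show False by (simp add: pairing_sym)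
    qed
  qed
qed

lemma dualK_closed: "closed (dualK A)"
proof -
  have "dualK A = (\<Inter>z\<in>A. {\<xi>. (\<lambda>_. 0) \<xi> \<le> (\<lambda>\<xi>. pairing \<xi> z) \<xi>})"
    by (auto simp: dualK_def)
  moreover have "closed {\<xi>. (\<lambda>_. 0::real) \<xi> \<le> (\<lambda>\<xi>. pairing \<xi> z) \<xi>}" for z
  proof -
    have "continuous_on UNIV (\<lambda>\<xi>. pairing \<xi> z)" unfolding pairing_def by (intro continuous_intros)
    from closed_Collect_le[OF continuous_on_const this] show ?thesis by simp
  qed
  ultimately show ?thesis by auto
qed

lemma dualK_add: "x \<in> dualK A \<Longrightarrow> y \<in> dualK A \<Longrightarrow> x + y \<in> dualK A"
  by (auto simp: dualK_def pairing_lin add_nonneg_nonneg)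

lemma dualK_scale: "x \<in> dualK A \<Longrightarrow> t \<ge> 0 \<Longrightarrow> t *\<^sub>R x \<in> dualK A"
  by (auto simp: dualK_def pairing_lin)

lemma cone_cl_eq:
  assumes A: "prop_i A" shows "cone_cl (antipolar A) = dualK A"
proof
  show "cone_cl (antipolar A) \<subseteq> dualK A"
    unfolding cone_cl_def
  proof (rule closure_minimal[OF _ dualK_closed])
    show "{t *\<^sub>R x |t x. 0 \<le> t \<and> x \<in> antipolar A} \<subseteq> dualK A"
    proof -
      have "t *\<^sub>R x \<in> dualK A" if "0 \<le> t" "x \<in> antipolar A" for t x
      proof -
        have "x \<in> dualK A" using that(2) unfolding dualK_def antipolar_iff by force
        thus ?thesis using dualK_scale that(1) by blast
      qed
      thus ?thesis by blast
    qed
  qed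
  show "dualK A \<subseteq> cone_cl (antipolar A)"
  proof
    fix \<xi> assume xi: "\<xi> \<in> dualK A"
    obtain \<eta> where eta: "\<eta> \<in> antipolar A" using antipolar_nonempty[OF A] by blast
    show "\<xi> \<in> cone_cl (antipolar A)" unfolding cone_cl_def closure_approachable
    proof (intro allI impI)
      fix e :: real assume e: "e > 0"
      define \<epsilon> where "\<epsilon> = e / (norm \<eta> + 1)"
      have ep: "\<epsilon> > 0" unfolding \<epsilon>_def using e by (intro divide_pos_pos) (auto simp: add_nonneg_pos)
      have "(1/\<epsilon>) *\<^sub>R \<xi> + \<eta> \<in> antipolar A" unfolding antipolar_iff
      proof
        fix z assume "z \<in> A"
        hence "0 \<le> pairing \<xi> z" "1 \<le> pairing \<eta> z" using xi eta by (auto simp: dualK_def antipolar_iff)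
        thus "1 \<le> pairing ((1/\<epsilon>) *\<^sub>R \<xi> + \<eta>) z" using ep by (simp add: pairing_lin add_increasing)
      qed
      hence mem0: "\<epsilon> *\<^sub>R ((1/\<epsilon>) *\<^sub>R \<xi> + \<eta>) \<in> {t *\<^sub>R x |t x. 0 \<le> t \<and> x \<in> antipolar A}"
        by (intro CollectI exI[of _ \<epsilon>] exI[of _ "(1/\<epsilon>) *\<^sub>R \<xi> + \<eta>"] conjI refl) (use ep in simp_all)
      have eq0: "\<epsilon> *\<^sub>R ((1/\<epsilon>) *\<^sub>R \<xi> + \<eta>) = \<xi> + \<epsilon> *\<^sub>R \<eta>" using ep
        by (simp add: algebra_simps)
      have d0: "dist (\<xi> + \<epsilon> *\<^sub>R \<eta>) \<xi> < e"
      proof -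
        have "dist (\<xi> + \<epsilon> *\<^sub>R \<eta>) \<xi> = \<epsilon> * norm \<eta>" using ep by (simp add: dist_norm)
        also have "\<dots> < \<epsilon> * (norm \<eta> + 1)" using ep by simp
        also have "\<dots> = e" proof -
          have nz: "norm \<eta> + 1 \<noteq> 0" using norm_ge_zero[of \<eta>] by linarith
          show ?thesis unfolding \<epsilon>_def times_divide_eq_left using nz by (rule nonzero_mult_div_cancel_right)
        qed
        finally show ?thesis .
      qed
      have mem: "\<xi> + \<epsilon> *\<^sub>R \<eta> \<in> {t *\<^sub>R x |t x. 0 \<le> t \<and> x \<in> antipolar A}"
        using mem0 unfolding eq0 .
      show "\<exists>y\<in>{t *\<^sub>R x |t x. 0 \<le> t \<and> x \<in> antipolar A}. dist y \<xi> < e"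
        using mem d0 by (rule bexI[rotated])
    qed
  qed
qed

lemma not_interior:
  fixes x d :: "real \<times> real"
  assumes "d \<noteq> 0" "\<And>\<epsilon>. \<epsilon> > 0 \<Longrightarrow> x + \<epsilon> *\<^sub>R d \<notin> S"
  shows "x \<notin> interior S"
proof
  assume "x \<in> interior S"
  then obtain e where e: "e > 0" "ball x e \<subseteq> S" using mem_interior by blast
  define \<epsilon> where "\<epsilon> = e / (2 * norm d)"
  have ep: "\<epsilon> > 0" unfolding \<epsilon>_def using e assms(1) by simp
  have "dist x (x + \<epsilon> *\<^sub>R d) = \<epsilon> * norm d" using ep by (simp add: dist_norm)
  also have "\<dots> = e / 2" unfolding \<epsilon>_def using assms(1) by simp
  finally have "x + \<epsilon> *\<^sub>R d \<in> ball x e" using e by simp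
  thus False using e assms(2)[OF ep] by blast
qed

lemma star_iff:
  assumes A: "prop_i A"
  shows "prop_star A \<longleftrightarrow> \<not> (\<exists>\<xi>\<in>dualK A. \<xi> \<noteq> 0 \<and> (\<exists>z\<in>A. pairing \<xi> z = 0))"
proof
  assume ps: "prop_star A"
  show "\<not> (\<exists>\<xi>\<in>dualK A. \<xi> \<noteq> 0 \<and> (\<exists>z\<in>A. pairing \<xi> z = 0))"
  proof
    assume "\<exists>\<xi>\<in>dualK A. \<xi> \<noteq> 0 \<and> (\<exists>z\<in>A. pairing \<xi> z = 0)"
    then obtain \<xi> z where xi: "\<xi> \<in> dualK A" "\<xi> \<noteq> 0" and z: "z \<in> A" "pairing \<xi> z = 0" by blast
    have z2: "2 *\<^sub>R z \<in> A" using prop_iD(5)[OF A, of 2] z by simp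
    have "2 *\<^sub>R z \<notin> interior A"
    proof (rule not_interior[of "- Jm \<xi>"])
      show "- Jm \<xi> \<noteq> 0" using xi by simp
      fix \<epsilon> :: real assume ep: "\<epsilon> > 0"
      have "pairing \<xi> (2 *\<^sub>R z + \<epsilon> *\<^sub>R - Jm \<xi>) = 2 * pairing \<xi> z - \<epsilon> * pairing \<xi> (Jm \<xi>)"
        by (simp add: pairing_def Jm_def algebra_simps)
      also have "\<dots> = - \<epsilon> * norm \<xi> ^ 2" using z(2) pairing_Jself(2)[of \<xi>] by simp
      also have "\<dots> < 0" using ep xi by simp
      finally show "2 *\<^sub>R z + \<epsilon> *\<^sub>R - Jm \<xi> \<notin> A" using xi by (auto simp: dualK_def)
    qed
    hence "2 *\<^sub>R z \<in> frontier A" using z2 closure_subset by (auto simp: frontier_def)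
    moreover have "2 *\<^sub>R z \<in> (\<lambda>x. 2 *\<^sub>R x) ` A" using z by blast
    moreover have "(\<lambda>x. (2::real) *\<^sub>R x) ` A \<inter> frontier A = {}" using ps unfolding prop_star_def by simp
    ultimately show False by blast
  qed
next
  assume nex: "\<not> (\<exists>\<xi>\<in>dualK A. \<xi> \<noteq> 0 \<and> (\<exists>z\<in>A. pairing \<xi> z = 0))"
  show "prop_star A"
  proof (rule ccontr)
    assume "\<not> prop_star A"
    then obtain c where c: "c > 1" and ne: "(\<lambda>x. c *\<^sub>R x) ` A \<inter> frontier A \<noteq> {}"
      unfolding prop_star_def by auto
    then obtain x where x: "x \<in> A" and fr: "c *\<^sub>R x \<in> frontier A" by auto
    obtain a where a: "a \<noteq> 0" "\<And>y. y \<in> A \<Longrightarrow> a \<bullet> (c *\<^sub>R x) \<le> a \<bullet> y"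
    proof (cases "interior A = {}")
      case True
      then obtain a b where ab: "a \<noteq> 0" "A \<subseteq> {x. a \<bullet> x = b}"
        using empty_interior_subset_hyperplane[OF prop_iD(2)[OF A] True] by blast
      have cx: "c *\<^sub>R x \<in> A" using prop_iD(5)[OF A c x] .
      have "a \<bullet> (c *\<^sub>R x) \<le> a \<bullet> y" if "y \<in> A" for y
      proof -
        have "a \<bullet> (c *\<^sub>R x) = b" using ab(2) cx by blast
        moreover have "a \<bullet> y = b" using ab(2) that by blast
        ultimately show ?thesis by simp
      qed
      thus ?thesis using that ab(1) by blast
    next
      case False
      hence ri: "rel_interior A = interior A" by (rule rel_interior_nonempty_interior)
      have "c *\<^sub>R x \<in> closure A" "c *\<^sub>R x \<notin> rel_interior A" using fr ri by (auto simp: frontier_def)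
      obtain a where "a \<noteq> 0" "\<And>y. y \<in> closure A \<Longrightarrow> a \<bullet> (c *\<^sub>R x) \<le> a \<bullet> y"
        "\<And>y. y \<in> rel_interior A \<Longrightarrow> a \<bullet> (c *\<^sub>R x) < a \<bullet> y"
        using supporting_hyperplane_relative_frontier[OF prop_iD(2)[OF A] \<open>c *\<^sub>R x \<in> closure A\<close> \<open>c *\<^sub>R x \<notin> rel_interior A\<close>] by blast
      moreover have "y \<in> A \<Longrightarrow> y \<in> closure A" for y using closure_subset by blast
      ultimately show ?thesis using that by blast
    qed
    have nn: "a \<bullet> w \<ge> 0" if w: "w \<in> A" for w
    proof (rule scale_nonneg[of "a \<bullet> (c *\<^sub>R x)"])
      fix c' :: real assume "c' > 1"
      hence "c' *\<^sub>R w \<in> A" using prop_iD(5)[OF A] w by blast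
      from a(2)[OF this] show "a \<bullet> (c *\<^sub>R x) \<le> c' * (a \<bullet> w)" by simp
    qed
    have "c * (a \<bullet> x) \<le> a \<bullet> x" using a(2)[OF x] by simp
    hence "(c - 1) * (a \<bullet> x) \<le> 0" by (simp add: left_diff_distrib)
    hence "a \<bullet> x \<le> 0" using c by (simp add: mult_le_0_iff)
    with nn[OF x] have ax: "a \<bullet> x = 0" by simp
    have "Jm a \<in> dualK A" using nn by (simp add: dualK_def)
    moreover have "Jm a \<noteq> 0" using a by simp
    moreover have "pairing (Jm a) x = 0" using ax by simp
    ultimately have "\<exists>\<xi>\<in>dualK A. \<xi> \<noteq> 0 \<and> (\<exists>z\<in>A. pairing \<xi> z = 0)" using x by blast
    thus False using nex by contradiction
  qed
qed

definition perp :: "real \<times> real \<Rightarrow> real \<times> real" where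
  "perp a = (- snd a, fst a)"

lemma ray_iff: "\<xi> \<in> ray u \<longleftrightarrow> (\<exists>t\<ge>0. \<xi> = t *\<^sub>R u)"
  by (auto simp: ray_def)

lemma zero_in_ray: "0 \<in> ray u"
  unfolding ray_iff by (intro exI[of _ 0]) simp

lemma perp_facts: "a \<bullet> perp a = 0" "perp a \<bullet> a = 0" "perp a \<bullet> perp a = a \<bullet> a"
  by (simp_all add: perp_def inner2 algebra_simps)

lemma aa_pos: "(a::real\<times>real) \<noteq> 0 \<Longrightarrow> a \<bullet> a > 0"
  by simp

lemma decomp_poly:
  fixes a f v :: "real \<times> real"
  assumes f: "f = perp a \<or> f = - perp a"
  shows "(a \<bullet> a) *\<^sub>R v = (a \<bullet> v) *\<^sub>R a + (f \<bullet> v) *\<^sub>R f"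
  using f by (auto simp: prod_eq_iff inner2 perp_def algebra_simps)

lemma decomp:
  fixes a f v :: "real \<times> real"
  assumes a: "a \<noteq> 0" and f: "f = perp a \<or> f = - perp a"
  shows "v = ((a \<bullet> v) / (a \<bullet> a)) *\<^sub>R a + ((f \<bullet> v) / (a \<bullet> a)) *\<^sub>R f"
proof -
  have N: "a \<bullet> a \<noteq> 0" using aa_pos[OF a] by simp
  have "v = (1 / (a \<bullet> a)) *\<^sub>R ((a \<bullet> a) *\<^sub>R v)" using N by simp
  also have "\<dots> = (1 / (a \<bullet> a)) *\<^sub>R ((a \<bullet> v) *\<^sub>R a + (f \<bullet> v) *\<^sub>R f)" by (simp only: decomp_poly[OF f])
  also have "\<dots> = ((a \<bullet> v) / (a \<bullet> a)) *\<^sub>R a + ((f \<bullet> v) / (a \<bullet> a)) *\<^sub>R f"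
    by (simp add: scaleR_add_right)
  finally show ?thesis .
qed

lemma vec_eq:
  fixes a f v w :: "real \<times> real"
  assumes a: "a \<noteq> 0" and f: "f = perp a \<or> f = - perp a"
    and "a \<bullet> v = a \<bullet> w" "f \<bullet> v = f \<bullet> w"
  shows "v = w"
  using decomp[OF a f, of v] decomp[OF a f, of w] assms(3,4) by simp

lemma f_facts:
  fixes a f :: "real \<times> real"
  assumes a: "a \<noteq> 0" and f: "f = perp a \<or> f = - perp a"
  shows "a \<bullet> f = 0" "f \<bullet> a = 0" "f \<bullet> f = a \<bullet> a" "f \<noteq> 0"
proof -
  show "a \<bullet> f = 0" "f \<bullet> a = 0" "f \<bullet> f = a \<bullet> a" using f perp_facts[of a] by auto
  thus "f \<noteq> 0" using aa_pos[OF a] by auto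
qed

lemma divh: "(N::real) > 0 \<Longrightarrow> e * N / M / N = e / M"
  by (simp add: field_simps)

locale conesetup =
  fixes K :: "(real \<times> real) set" and a \<eta> :: "real \<times> real"
  assumes Kc: "closed K"
    and Kadd: "\<And>x y. x \<in> K \<Longrightarrow> y \<in> K \<Longrightarrow> x + y \<in> K"
    and Ksc: "\<And>x t. x \<in> K \<Longrightarrow> t \<ge> 0 \<Longrightarrow> t *\<^sub>R x \<in> K"
    and Kpos: "\<And>x. x \<in> K \<Longrightarrow> a \<bullet> x \<ge> 0"
    and eta: "\<eta> \<in> K" "a \<bullet> \<eta> > 0"
begin

lemma a_nz: "a \<noteq> 0" using eta by auto

lemma aa: "a \<bullet> a > 0" using aa_pos[OF a_nz] .

lemma ray_sub_K: "u \<in> K \<Longrightarrow> ray u \<subseteq> K"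
  unfolding ray_def by (auto intro!: Ksc)

lemma frontier_K: "frontier K = K - interior K"
  using Kc by (simp add: frontier_def closure_closed)

lemma side:
  fixes f :: "real \<times> real"
  assumes f: "f = perp a \<or> f = - perp a"
  obtains u where "u \<noteq> 0" "ray u \<subseteq> frontier K"
    "\<And>\<xi>. \<xi> \<in> K \<Longrightarrow> a \<bullet> \<xi> = 0 \<Longrightarrow> f \<bullet> \<xi> > 0 \<Longrightarrow> \<xi> \<in> ray u"
    "\<And>\<xi>. \<xi> \<in> K \<Longrightarrow> a \<bullet> \<xi> > 0 \<Longrightarrow> \<xi> \<notin> ray u \<Longrightarrow>
        \<exists>p\<in>K. a \<bullet> p > 0 \<and> (f \<bullet> p) * (a \<bullet> \<xi>) > (f \<bullet> \<xi>) * (a \<bullet> p)"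
proof -
  note ff = f_facts[OF a_nz f]
  note dc = decomp[OF a_nz f]
  note ve = vec_eq[OF a_nz f]
  show ?thesis
  proof (cases "\<exists>m\<in>K. a \<bullet> m > 0 \<and> (\<forall>p\<in>K. a \<bullet> p > 0 \<longrightarrow> (f \<bullet> p) * (a \<bullet> m) \<le> (f \<bullet> m) * (a \<bullet> p))")
    case True
    then obtain m where m: "m \<in> K" "a \<bullet> m > 0"
      and mx: "\<And>p. p \<in> K \<Longrightarrow> a \<bullet> p > 0 \<Longrightarrow> (f \<bullet> p) * (a \<bullet> m) \<le> (f \<bullet> m) * (a \<bullet> p)" by blast
    show ?thesis
    proof (rule that[of m])
      show "m \<noteq> 0" using m by auto
      show "ray m \<subseteq> frontier K"
      proof
        fix x assume "x \<in> ray m"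
        then obtain t where t: "t \<ge> 0" "x = t *\<^sub>R m" by (auto simp: ray_iff)
        have xK: "x \<in> K" using t m Ksc by simp
        have "x \<notin> interior K"
        proof (cases "t = 0")
          case True
          show ?thesis
          proof (rule not_interior[of "- a"])
            show "- a \<noteq> 0" using a_nz by simp
            fix \<epsilon> :: real assume "\<epsilon> > 0"
            hence "a \<bullet> (x + \<epsilon> *\<^sub>R - a) < 0" using True t aa by simp
            thus "x + \<epsilon> *\<^sub>R - a \<notin> K" using Kpos not_le by blast
          qed
        next
          case False
          hence tp: "t > 0" using t by simp
          show ?thesis
          proof (rule not_interior[of f])
            show "f \<noteq> 0" using ff by simp
            fix \<epsilon> :: real assume ep: "\<epsilon> > 0"
            show "x + \<epsilon> *\<^sub>R f \<notin> K"
            proof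
              assume pK: "x + \<epsilon> *\<^sub>R f \<in> K"
              have ap: "a \<bullet> (x + \<epsilon> *\<^sub>R f) = t * (a \<bullet> m)" using t ff by (simp add: inner_add_right)
              have fp: "f \<bullet> (x + \<epsilon> *\<^sub>R f) = t * (f \<bullet> m) + \<epsilon> * (a \<bullet> a)" using t ff by (simp add: inner_add_right)
              have "a \<bullet> (x + \<epsilon> *\<^sub>R f) > 0" using ap tp m by simp
              from mx[OF pK this] have "(t * (f \<bullet> m) + \<epsilon> * (a \<bullet> a)) * (a \<bullet> m) \<le> (f \<bullet> m) * (t * (a \<bullet> m))"
                unfolding ap fp .
              hence "\<epsilon> * (a \<bullet> a) * (a \<bullet> m) \<le> 0" by (simp add: algebra_simps)
              moreover have "\<epsilon> * (a \<bullet> a) * (a \<bullet> m) > 0" using ep aa m by simp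
              ultimately show False by simp
            qed
          qed
        qed
        thus "x \<in> frontier K" using xK frontier_K by blast
      qed
      fix \<xi> assume xi: "\<xi> \<in> K"
      {
        assume "a \<bullet> \<xi> = 0" "f \<bullet> \<xi> > 0"
        have "m + \<xi> \<in> K" using Kadd m xi by blast
        moreover have "a \<bullet> (m + \<xi>) > 0" using m \<open>a \<bullet> \<xi> = 0\<close> by (simp add: inner_add_right)
        ultimately have "(f \<bullet> (m + \<xi>)) * (a \<bullet> m) \<le> (f \<bullet> m) * (a \<bullet> (m + \<xi>))" by (rule mx)
        hence "(f \<bullet> \<xi>) * (a \<bullet> m) \<le> 0" using \<open>a \<bullet> \<xi> = 0\<close> by (simp add: inner_add_right algebra_simps)
        moreover have "(f \<bullet> \<xi>) * (a \<bullet> m) > 0" using \<open>f \<bullet> \<xi> > 0\<close> m by simp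
        ultimately show "\<xi> \<in> ray m" by simp
      }
      {
        assume axi: "a \<bullet> \<xi> > 0" and nr: "\<xi> \<notin> ray m"
        show "\<exists>p\<in>K. a \<bullet> p > 0 \<and> (f \<bullet> p) * (a \<bullet> \<xi>) > (f \<bullet> \<xi>) * (a \<bullet> p)"
        proof (rule ccontr)
          assume "\<not> ?thesis"
          hence "(f \<bullet> m) * (a \<bullet> \<xi>) \<le> (f \<bullet> \<xi>) * (a \<bullet> m)" using m by (meson not_less)
          moreover have "(f \<bullet> \<xi>) * (a \<bullet> m) \<le> (f \<bullet> m) * (a \<bullet> \<xi>)" by (rule mx[OF xi axi])
          ultimately have eq: "(f \<bullet> \<xi>) * (a \<bullet> m) = (f \<bullet> m) * (a \<bullet> \<xi>)" by simp
          define c where "c = (a \<bullet> \<xi>) / (a \<bullet> m)"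
          have c: "c \<ge> 0" unfolding c_def using axi m by simp
          have "\<xi> = c *\<^sub>R m"
          proof (rule ve)
            show "a \<bullet> \<xi> = a \<bullet> (c *\<^sub>R m)" unfolding c_def using m by simp
            show "f \<bullet> \<xi> = f \<bullet> (c *\<^sub>R m)" unfolding c_def using m eq
              by (simp add: field_simps)
          qed
          hence "\<xi> \<in> ray m" using c by (auto simp: ray_iff)
          thus False using nr by simp
        qed
      }
    qed
  next
    case False
    hence nomax: "\<And>m. m \<in> K \<Longrightarrow> a \<bullet> m > 0 \<Longrightarrow> \<exists>p\<in>K. a \<bullet> p > 0 \<and> (f \<bullet> p) * (a \<bullet> m) > (f \<bullet> m) * (a \<bullet> p)"
      by (meson not_le)
    define p0 where "p0 = (1 / (a \<bullet> \<eta>)) *\<^sub>R \<eta>"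
    have p0: "p0 \<in> K" "a \<bullet> p0 = 1" unfolding p0_def using eta Ksc by auto
    define S where "S = (\<lambda>p. f \<bullet> p) ` {p\<in>K. a \<bullet> p = 1}"
    have Sne: "S \<noteq> {}" unfolding S_def using p0 by blast
    have unb: "\<exists>p\<in>K. a \<bullet> p = 1 \<and> f \<bullet> p > M" for M
    proof (rule ccontr)
      assume "\<not> ?thesis"
      hence "bdd_above S" unfolding S_def bdd_above_def by (auto simp: not_less)
      define s where "s = Sup S"
      have le_s: "f \<bullet> p \<le> s" if "p \<in> K" "a \<bullet> p = 1" for p
        unfolding s_def using that \<open>bdd_above S\<close> by (intro cSup_upper) (auto simp: S_def)
      have near: "\<exists>p\<in>K. a \<bullet> p = 1 \<and> f \<bullet> p > s - \<delta>" if "\<delta> > 0" for \<delta>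
      proof -
        have "s - \<delta> < Sup S" using that s_def by simp
        then obtain y where "y \<in> S" "s - \<delta> < y" using less_cSup_iff[OF Sne \<open>bdd_above S\<close>] by blast
        thus ?thesis unfolding S_def by blast
      qed
      define m where "m = (1 / (a \<bullet> a)) *\<^sub>R a + (s / (a \<bullet> a)) *\<^sub>R f"
      have am: "a \<bullet> m = 1" unfolding m_def using aa ff by (simp add: inner_add_right)
      have fm: "f \<bullet> m = s" unfolding m_def using aa ff by (simp add: inner_add_right)
      have mK: "m \<in> K"
      proof (rule closed_approachable[OF Kc, THEN iffD1], intro allI impI)
        fix \<epsilon> :: real assume ep: "\<epsilon> > 0"
        define \<delta> where "\<delta> = \<epsilon> * (a \<bullet> a) / (norm f + 1)"
        have nf: "norm f + 1 > 0" by (simp add: add_nonneg_pos)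
        have dp: "\<delta> > 0" unfolding \<delta>_def using ep aa nf by simp
        obtain p where p: "p \<in> K" "a \<bullet> p = 1" "f \<bullet> p > s - \<delta>" using near[OF dp] by blast
        have ps: "f \<bullet> p \<le> s" using le_s p by simp
        have "p - m = ((f \<bullet> p - s) / (a \<bullet> a)) *\<^sub>R f"
        proof (rule ve)
          show "a \<bullet> (p - m) = a \<bullet> (((f \<bullet> p - s) / (a \<bullet> a)) *\<^sub>R f)" using p am ff by (simp add: inner_diff_right)
          show "f \<bullet> (p - m) = f \<bullet> (((f \<bullet> p - s) / (a \<bullet> a)) *\<^sub>R f)" using fm ff aa by (simp add: inner_diff_right)
        qed
        hence "dist p m = (s - f \<bullet> p) / (a \<bullet> a) * norm f"
          using ps aa by (simp add: dist_norm)
        also have "\<dots> \<le> \<delta> / (a \<bullet> a) * norm f"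
          using p(3) aa by (intro mult_right_mono divide_right_mono) auto
        also have "\<dots> = \<epsilon> * norm f / (norm f + 1)"
        proof -
          have "\<delta> / (a \<bullet> a) = \<epsilon> / (norm f + 1)" unfolding \<delta>_def by (rule divh[OF aa])
          thus ?thesis by simp
        qed
        also have "\<dots> < \<epsilon>" using ep nf by (simp add: field_simps)
        finally show "\<exists>y\<in>K. dist y m < \<epsilon>" using p(1) by blast
      qed
      have "\<exists>p\<in>K. a \<bullet> p > 0 \<and> (f \<bullet> p) * (a \<bullet> m) > (f \<bullet> m) * (a \<bullet> p)" using nomax[OF mK] am by simp
      then obtain p where p: "p \<in> K" "a \<bullet> p > 0" "f \<bullet> p > s * (a \<bullet> p)" using am fm by auto
      define p' where "p' = (1 / (a \<bullet> p)) *\<^sub>R p"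
      have "p' \<in> K" "a \<bullet> p' = 1" unfolding p'_def using p Ksc by auto
      hence "f \<bullet> p' \<le> s" by (rule le_s)
      hence "f \<bullet> p \<le> s * (a \<bullet> p)" unfolding p'_def using p(2) by (simp add: field_simps)
      thus False using p(3) by simp
    qed
    have fK: "f \<in> K"
    proof (rule closed_approachable[OF Kc, THEN iffD1], intro allI impI)
      fix \<epsilon> :: real assume ep: "\<epsilon> > 0"
      obtain p where p: "p \<in> K" "a \<bullet> p = 1" "f \<bullet> p > max 1 (norm a / \<epsilon>)" using unb by blast
      define b where "b = f \<bullet> p"
      have b: "b > 0" "b > norm a / \<epsilon>" using p(3) unfolding b_def by auto
      have yK: "((a \<bullet> a) / b) *\<^sub>R p \<in> K" using Ksc p aa b by simp
      have "((a \<bullet> a) / b) *\<^sub>R p = (1 / b) *\<^sub>R a + f"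
      proof (rule ve)
        show "a \<bullet> (((a \<bullet> a) / b) *\<^sub>R p) = a \<bullet> ((1 / b) *\<^sub>R a + f)" using p ff by (simp add: inner_add_right)
        show "f \<bullet> (((a \<bullet> a) / b) *\<^sub>R p) = f \<bullet> ((1 / b) *\<^sub>R a + f)" using p ff b unfolding b_def by (simp add: inner_add_right)
      qed
      hence "dist (((a \<bullet> a) / b) *\<^sub>R p) f = norm a / b" using b by (simp add: dist_norm)
      also have "\<dots> < \<epsilon>" using b ep by (simp add: field_simps)
      finally show "\<exists>y\<in>K. dist y f < \<epsilon>" using yK by blast
    qed
    show ?thesis
    proof (rule that[of f])
      show "f \<noteq> 0" using ff by simp
      show "ray f \<subseteq> frontier K"
      proof
        fix x assume "x \<in> ray f"
        then obtain t where t: "t \<ge> 0" "x = t *\<^sub>R f" by (auto simp: ray_iff)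
        have xK: "x \<in> K" using t fK Ksc by simp
        have "x \<notin> interior K"
        proof (rule not_interior[of "- a"])
          show "- a \<noteq> 0" using a_nz by simp
          fix \<epsilon> :: real assume "\<epsilon> > 0"
          hence "a \<bullet> (x + \<epsilon> *\<^sub>R - a) < 0" using t aa ff by (simp add: inner_add_right inner_diff_right)
          thus "x + \<epsilon> *\<^sub>R - a \<notin> K" using Kpos not_le by blast
        qed
        thus "x \<in> frontier K" using xK frontier_K by blast
      qed
      fix \<xi> assume xi: "\<xi> \<in> K"
      {
        assume "a \<bullet> \<xi> = 0" "f \<bullet> \<xi> > 0"
        have "\<xi> = ((f \<bullet> \<xi>) / (a \<bullet> a)) *\<^sub>R f"
          using dc[of \<xi>] \<open>a \<bullet> \<xi> = 0\<close> by simp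
        moreover have "(f \<bullet> \<xi>) / (a \<bullet> a) \<ge> 0" using \<open>f \<bullet> \<xi> > 0\<close> aa by simp
        ultimately show "\<xi> \<in> ray f" unfolding ray_iff by blast
      }
      {
        assume "a \<bullet> \<xi> > 0"
        thus "\<exists>p\<in>K. a \<bullet> p > 0 \<and> (f \<bullet> p) * (a \<bullet> \<xi>) > (f \<bullet> \<xi>) * (a \<bullet> p)" using nomax xi by blast
      }
    qed
  qed
qed

end

lemma solve2:
  fixes \<alpha>1 \<alpha>2 \<beta>1 \<beta>2 \<alpha> \<beta> D :: real
  assumes "D = \<alpha>1 * \<beta>2 - \<beta>1 * \<alpha>2" "D \<noteq> 0"
  shows "((\<alpha> * \<beta>2 - \<beta> * \<alpha>2) / D) * \<alpha>1 + ((\<beta> * \<alpha>1 - \<alpha> * \<beta>1) / D) * \<alpha>2 = \<alpha>"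
    "((\<alpha> * \<beta>2 - \<beta> * \<alpha>2) / D) * \<beta>1 + ((\<beta> * \<alpha>1 - \<alpha> * \<beta>1) / D) * \<beta>2 = \<beta>"
proof -
  have e1: "(\<alpha> * \<beta>2 - \<beta> * \<alpha>2) * \<alpha>1 + (\<beta> * \<alpha>1 - \<alpha> * \<beta>1) * \<alpha>2 = \<alpha> * D"
    unfolding assms(1) by (simp add: algebra_simps)
  have e2: "(\<alpha> * \<beta>2 - \<beta> * \<alpha>2) * \<beta>1 + (\<beta> * \<alpha>1 - \<alpha> * \<beta>1) * \<beta>2 = \<beta> * D"
    unfolding assms(1) by (simp add: algebra_simps)
  have "((\<alpha> * \<beta>2 - \<beta> * \<alpha>2) / D) * \<alpha>1 + ((\<beta> * \<alpha>1 - \<alpha> * \<beta>1) / D) * \<alpha>2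
      = ((\<alpha> * \<beta>2 - \<beta> * \<alpha>2) * \<alpha>1 + (\<beta> * \<alpha>1 - \<alpha> * \<beta>1) * \<alpha>2) / D"
    by (simp add: add_divide_distrib)
  also have "\<dots> = \<alpha>" unfolding e1 using assms(2) by simp
  finally show "((\<alpha> * \<beta>2 - \<beta> * \<alpha>2) / D) * \<alpha>1 + ((\<beta> * \<alpha>1 - \<alpha> * \<beta>1) / D) * \<alpha>2 = \<alpha>" .
  have "((\<alpha> * \<beta>2 - \<beta> * \<alpha>2) / D) * \<beta>1 + ((\<beta> * \<alpha>1 - \<alpha> * \<beta>1) / D) * \<beta>2
      = ((\<alpha> * \<beta>2 - \<beta> * \<alpha>2) * \<beta>1 + (\<beta> * \<alpha>1 - \<alpha> * \<beta>1) * \<beta>2) / D"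
    by (simp add: add_divide_distrib)
  also have "\<dots> = \<beta>" unfolding e2 using assms(2) by simp
  finally show "((\<alpha> * \<beta>2 - \<beta> * \<alpha>2) / D) * \<beta>1 + ((\<beta> * \<alpha>1 - \<alpha> * \<beta>1) / D) * \<beta>2 = \<beta>" .
qed

lemma Dpos:
  fixes \<alpha>0 \<alpha>1 \<alpha>2 \<beta>0 \<beta>1 \<beta>2 :: real
  assumes "\<alpha>0 > 0" "\<alpha>1 > 0" "\<alpha>2 > 0" "\<beta>0 * \<alpha>1 > \<beta>1 * \<alpha>0" "\<beta>2 * \<alpha>0 > \<beta>0 * \<alpha>2"
  shows "\<alpha>1 * \<beta>2 - \<beta>1 * \<alpha>2 > 0"
proof -
  have "\<alpha>1 * (\<beta>2 * \<alpha>0) > \<alpha>1 * (\<beta>0 * \<alpha>2)" using assms by (intro mult_strict_left_mono) auto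
  moreover have "\<alpha>2 * (\<beta>0 * \<alpha>1) > \<alpha>2 * (\<beta>1 * \<alpha>0)" using assms by (intro mult_strict_left_mono) auto
  ultimately have "\<alpha>0 * (\<alpha>1 * \<beta>2 - \<beta>1 * \<alpha>2) > 0" by (simp add: algebra_simps)
  thus ?thesis using assms(1) by (simp add: zero_less_mult_iff)
qed

context conesetup begin

lemma wedge_interior:
  assumes p: "p1 \<in> K" "p2 \<in> K" "a \<bullet> p1 > 0" "a \<bullet> p2 > 0" and xi: "a \<bullet> \<xi> > 0"
    and h1: "(g \<bullet> \<xi>) * (a \<bullet> p1) > (g \<bullet> p1) * (a \<bullet> \<xi>)"
    and h2: "(g \<bullet> p2) * (a \<bullet> \<xi>) > (g \<bullet> \<xi>) * (a \<bullet> p2)"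
    and g: "g = perp a \<or> g = - perp a"
  shows "\<xi> \<in> interior K"
proof -
  define D where "D = (a \<bullet> p1) * (g \<bullet> p2) - (g \<bullet> p1) * (a \<bullet> p2)"
  have Dp: "D > 0" unfolding D_def using Dpos[OF xi p(3,4) h1 h2] .
  define U where "U = {v. (g \<bullet> p1) * (a \<bullet> v) < (g \<bullet> v) * (a \<bullet> p1)} \<inter> {v. (g \<bullet> v) * (a \<bullet> p2) < (g \<bullet> p2) * (a \<bullet> v)}"
  have "open U" unfolding U_def
    by (intro open_Int open_Collect_less continuous_intros)
  moreover have "\<xi> \<in> U" unfolding U_def using h1 h2 by (simp add: mult.commute)
  moreover have "U \<subseteq> K"
  proof
    fix v assume "v \<in> U"
    hence v1: "(g \<bullet> p1) * (a \<bullet> v) < (g \<bullet> v) * (a \<bullet> p1)" and v2: "(g \<bullet> v) * (a \<bullet> p2) < (g \<bullet> p2) * (a \<bullet> v)"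
      unfolding U_def by auto
    define s where "s = ((a \<bullet> v) * (g \<bullet> p2) - (g \<bullet> v) * (a \<bullet> p2)) / D"
    define t where "t = ((g \<bullet> v) * (a \<bullet> p1) - (a \<bullet> v) * (g \<bullet> p1)) / D"
    have s: "s \<ge> 0" unfolding s_def using v2 Dp by (simp add: mult.commute)
    have t: "t \<ge> 0" unfolding t_def using v1 Dp by (simp add: mult.commute)
    note sv = solve2[OF D_def, of "a \<bullet> v" "g \<bullet> v"]
    have "v = s *\<^sub>R p1 + t *\<^sub>R p2"
    proof (rule vec_eq[OF a_nz g])
      show "a \<bullet> v = a \<bullet> (s *\<^sub>R p1 + t *\<^sub>R p2)"
        using sv(1) Dp unfolding s_def t_def by (simp add: inner_add_right)
      show "g \<bullet> v = g \<bullet> (s *\<^sub>R p1 + t *\<^sub>R p2)"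
        using sv(2) Dp unfolding s_def t_def by (simp add: inner_add_right)
    qed
    thus "v \<in> K" using Kadd Ksc p s t by simp
  qed
  ultimately show ?thesis by (rule interiorI)
qed

lemma two_rays: "\<exists>u0 u1. u0 \<noteq> 0 \<and> u1 \<noteq> 0 \<and> frontier K = ray u0 \<union> ray u1"
proof -
  define g where "g = perp a"
  have g1: "g = perp a \<or> g = - perp a" and g0: "- g = perp a \<or> - g = - perp a" by (simp_all add: g_def)
  obtain u1 where U1: "u1 \<noteq> 0" "ray u1 \<subseteq> frontier K"
    "\<And>\<xi>. \<xi> \<in> K \<Longrightarrow> a \<bullet> \<xi> = 0 \<Longrightarrow> g \<bullet> \<xi> > 0 \<Longrightarrow> \<xi> \<in> ray u1"
    "\<And>\<xi>. \<xi> \<in> K \<Longrightarrow> a \<bullet> \<xi> > 0 \<Longrightarrow> \<xi> \<notin> ray u1 \<Longrightarrow>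
        \<exists>p\<in>K. a \<bullet> p > 0 \<and> (g \<bullet> p) * (a \<bullet> \<xi>) > (g \<bullet> \<xi>) * (a \<bullet> p)"
    using side[OF g1] by blast
  obtain u0 where U0: "u0 \<noteq> 0" "ray u0 \<subseteq> frontier K"
    "\<And>\<xi>. \<xi> \<in> K \<Longrightarrow> a \<bullet> \<xi> = 0 \<Longrightarrow> (- g) \<bullet> \<xi> > 0 \<Longrightarrow> \<xi> \<in> ray u0"
    "\<And>\<xi>. \<xi> \<in> K \<Longrightarrow> a \<bullet> \<xi> > 0 \<Longrightarrow> \<xi> \<notin> ray u0 \<Longrightarrow>
        \<exists>p\<in>K. a \<bullet> p > 0 \<and> ((- g) \<bullet> p) * (a \<bullet> \<xi>) > ((- g) \<bullet> \<xi>) * (a \<bullet> p)"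
    using side[OF g0] by blast
  have "frontier K = ray u0 \<union> ray u1"
  proof
    show "ray u0 \<union> ray u1 \<subseteq> frontier K" using U0(2) U1(2) by blast
    show "frontier K \<subseteq> ray u0 \<union> ray u1"
    proof
      fix \<xi> assume fr: "\<xi> \<in> frontier K"
      hence xK: "\<xi> \<in> K" and ni: "\<xi> \<notin> interior K" using frontier_K by auto
      show "\<xi> \<in> ray u0 \<union> ray u1"
      proof (rule ccontr)
        assume nr: "\<xi> \<notin> ray u0 \<union> ray u1"
        have "a \<bullet> \<xi> \<ge> 0" using Kpos xK by blast
        show False
        proof (cases "a \<bullet> \<xi> = 0")
          case True
          have "\<xi> \<noteq> 0" using nr zero_in_ray by blast
          have "\<xi> = ((g \<bullet> \<xi>) / (a \<bullet> a)) *\<^sub>R g" using decomp[OF a_nz g1, of \<xi>] True by simp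
          hence "g \<bullet> \<xi> \<noteq> 0" using \<open>\<xi> \<noteq> 0\<close> by auto
          hence "g \<bullet> \<xi> > 0 \<or> (- g) \<bullet> \<xi> > 0" by auto
          thus False using U0(3) U1(3) xK True nr by blast
        next
          case False
          hence ax: "a \<bullet> \<xi> > 0" using \<open>a \<bullet> \<xi> \<ge> 0\<close> by simp
          obtain p2 where p2: "p2 \<in> K" "a \<bullet> p2 > 0" "(g \<bullet> p2) * (a \<bullet> \<xi>) > (g \<bullet> \<xi>) * (a \<bullet> p2)"
            using U1(4)[OF xK ax] nr by blast
          obtain p1 where p1: "p1 \<in> K" "a \<bullet> p1 > 0" "((- g) \<bullet> p1) * (a \<bullet> \<xi>) > ((- g) \<bullet> \<xi>) * (a \<bullet> p1)"
            using U0(4)[OF xK ax] nr by blast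
          have h1: "(g \<bullet> \<xi>) * (a \<bullet> p1) > (g \<bullet> p1) * (a \<bullet> \<xi>)" using p1(3) by simp
          have "\<xi> \<in> interior K" by (rule wedge_interior[OF p1(1) p2(1) p1(2) p2(2) ax h1 p2(3) g1])
          thus False using ni by simp
        qed
      qed
    qed
  qed
  thus ?thesis using U0(1) U1(1) by blast
qed

end

lemma antipolar_sub_dualK: "antipolar A \<subseteq> dualK A"
  by (force simp: antipolar_iff dualK_def)

lemma setdist_zero_of_star:
  assumes A: "prop_i A" and u: "u \<in> dualK A" "u \<noteq> 0"
    and nex: "\<not> (\<exists>\<xi>\<in>dualK A. \<xi> \<noteq> 0 \<and> (\<exists>z\<in>A. pairing \<xi> z = 0))"
  shows "setdist (ray u) (antipolar A) = 0"
proof (rule ccontr)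
  assume "setdist (ray u) (antipolar A) \<noteq> 0"
  hence dp: "setdist (ray u) (antipolar A) > 0" using setdist_pos_le[of "ray u" "antipolar A"] by linarith
  define \<delta> where "\<delta> = setdist (ray u) (antipolar A)"
  have pos: "pairing u z > 0" if "z \<in> A" for z
  proof -
    have "pairing u z \<ge> 0" using u that by (simp add: dualK_def)
    moreover have "pairing u z \<noteq> 0" using nex u that by blast
    ultimately show ?thesis by simp
  qed
  define Ds where "Ds = {\<eta> - t *\<^sub>R u | \<eta> t. \<eta> \<in> antipolar A \<and> t \<ge> 0}"
  have cvA: "convex (antipolar A)" using prop_iD(2)[OF antipolar_prop_i[OF A]] .
  have "convex Ds"
  proof (rule convexI)
    fix x y and c1 c2 :: real
    assume "x \<in> Ds" "y \<in> Ds" and c: "0 \<le> c1" "0 \<le> c2" "c1 + c2 = 1"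
    then obtain \<eta>1 t1 \<eta>2 t2 where xy: "x = \<eta>1 - t1 *\<^sub>R u" "\<eta>1 \<in> antipolar A" "t1 \<ge> 0"
      "y = \<eta>2 - t2 *\<^sub>R u" "\<eta>2 \<in> antipolar A" "t2 \<ge> 0" unfolding Ds_def by blast
    have "c1 *\<^sub>R x + c2 *\<^sub>R y = (c1 *\<^sub>R \<eta>1 + c2 *\<^sub>R \<eta>2) - (c1 * t1 + c2 * t2) *\<^sub>R u"
      unfolding xy by (simp add: algebra_simps)
    moreover have "c1 *\<^sub>R \<eta>1 + c2 *\<^sub>R \<eta>2 \<in> antipolar A" using cvA xy c by (simp add: convex_def)
    moreover have "c1 * t1 + c2 * t2 \<ge> 0" using c xy by simp
    ultimately show "c1 *\<^sub>R x + c2 *\<^sub>R y \<in> Ds" unfolding Ds_def by blast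
  qed
  have "0 \<notin> closure Ds"
  proof
    assume "0 \<in> closure Ds"
    hence "\<forall>\<epsilon>>0. \<exists>y\<in>Ds. dist y 0 < \<epsilon>" using closure_approachable by blast
    moreover have "\<delta> > 0" using dp \<delta>_def by simp
    ultimately obtain y where "y \<in> Ds" "dist y 0 < \<delta>" by blast
    then obtain \<eta> t where y: "y = \<eta> - t *\<^sub>R u" "\<eta> \<in> antipolar A" "t \<ge> 0" and "norm y < \<delta>"
      unfolding Ds_def by auto
    have "t *\<^sub>R u \<in> ray u" using y by (auto simp: ray_iff)
    hence "\<delta> \<le> dist (t *\<^sub>R u) \<eta>" unfolding \<delta>_def using y by (intro setdist_le_dist)
    also have "\<dots> = norm y" using y by (simp add: dist_norm norm_minus_commute)
    finally show False using \<open>norm y < \<delta>\<close> by simp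
  qed
  then obtain a b where ab: "a \<noteq> 0" "0 < b" "\<forall>x\<in>closure Ds. a \<bullet> x > b"
    using separating_hyperplane_closed_0[OF convex_closure[OF \<open>convex Ds\<close>] closed_closure] by blast
  have sep: "a \<bullet> (\<eta> - t *\<^sub>R u) > b" if "\<eta> \<in> antipolar A" "t \<ge> 0" for \<eta> t
  proof -
    have "\<eta> - t *\<^sub>R u \<in> Ds" unfolding Ds_def using that by blast
    thus ?thesis using ab closure_subset by blast
  qed
  obtain \<eta>0 where eta0: "\<eta>0 \<in> antipolar A" using antipolar_nonempty[OF A] by blast
  have au: "a \<bullet> u \<le> 0"
  proof (rule ccontr)
    assume "\<not> a \<bullet> u \<le> 0"
    hence aup: "a \<bullet> u > 0" by simp
    have "a \<bullet> \<eta>0 > b" using sep[OF eta0, of 0] by simp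
    define t where "t = (a \<bullet> \<eta>0) / (a \<bullet> u)"
    have "t \<ge> 0" unfolding t_def using aup \<open>a \<bullet> \<eta>0 > b\<close> ab(2) by simp
    from sep[OF eta0 this] have "a \<bullet> \<eta>0 - t * (a \<bullet> u) > b" by (simp add: inner_diff_right)
    moreover have "t * (a \<bullet> u) = a \<bullet> \<eta>0" unfolding t_def using aup by simp
    ultimately show False using ab(2) by simp
  qed
  define z where "z = (1 / b) *\<^sub>R Jm a"
  have "z \<in> antipolar (antipolar A)" unfolding antipolar_iff
  proof
    fix \<eta> assume "\<eta> \<in> antipolar A"
    from sep[OF this, of 0] have "a \<bullet> \<eta> > b" by simp
    hence "\<eta> \<bullet> a / b > 1" using ab(2) by (simp add: inner_commute)
    thus "1 \<le> pairing z \<eta>" unfolding z_def by (simp add: pairing_lin pairing_sym[of _ \<eta>])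
  qed
  hence "z \<in> A" using bipolar[OF A] by simp
  moreover have "pairing u z = (u \<bullet> a) / b" unfolding z_def by (simp add: pairing_lin)
  moreover have "u \<bullet> a \<le> 0" using au by (simp add: inner_commute)
  ultimately have "pairing u z \<le> 0" using ab(2) by (simp add: divide_nonpos_pos)
  moreover have "pairing u z > 0" using pos[OF \<open>z \<in> A\<close>] .
  ultimately show False by simp
qed

lemma setdist_pos_of_touch:
  assumes A: "prop_i A" and z: "z \<in> A" and uz: "pairing u z = 0"
  shows "setdist (ray u) (antipolar A) \<ge> 1 / norm z"
proof -
  have zn: "z \<noteq> 0" using z prop_iD(4)[OF A] by auto
  have "1 / norm z \<le> dist x y" if xr: "x \<in> ray u" and yA: "y \<in> antipolar A" for x y
  proof -
    obtain s where s: "x = s *\<^sub>R u" using xr by (auto simp: ray_iff)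
    have "1 \<le> pairing y z" using yA z by (simp add: antipolar_iff)
    also have "\<dots> = pairing (y - x) z" using s uz by (simp add: pairing_lin)
    also have "\<dots> \<le> norm (y - x) * norm z" using abs_pairing_le[of "y - x" z] by simp
    also have "\<dots> = dist x y * norm z" by (simp add: dist_norm norm_minus_commute)
    finally show ?thesis using zn by (simp add: field_simps)
  qed
  moreover have "ray u \<noteq> {}" using zero_in_ray by blast
  moreover have "antipolar A \<noteq> {}" using antipolar_nonempty[OF A] .
  ultimately show ?thesis by (simp add: le_setdist_iff)
qed

lemma main:
  assumes A: "prop_i A"
  shows "prop_star A \<longleftrightarrow> prop_starstar (antipolar A)"
proof -
  obtain z0 where z0: "z0 \<in> A" using prop_iD(1)[OF A] by blast
  obtain \<eta> where eta: "\<eta> \<in> antipolar A" using antipolar_nonempty[OF A] by blast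
  have CK: "cone_cl (antipolar A) = dualK A" by (rule cone_cl_eq[OF A])
  interpret cs: conesetup "dualK A" "Jm z0" \<eta>
  proof
    show "closed (dualK A)" by (rule dualK_closed)
    show "\<And>x y. x \<in> dualK A \<Longrightarrow> y \<in> dualK A \<Longrightarrow> x + y \<in> dualK A" by (rule dualK_add)
    show "\<And>x t. x \<in> dualK A \<Longrightarrow> 0 \<le> t \<Longrightarrow> t *\<^sub>R x \<in> dualK A" by (rule dualK_scale)
    show "\<And>x. x \<in> dualK A \<Longrightarrow> 0 \<le> Jm z0 \<bullet> x"
    proof -
      fix x assume "x \<in> dualK A"
      hence "pairing x z0 \<ge> 0" using z0 by (simp add: dualK_def)
      thus "0 \<le> Jm z0 \<bullet> x" by (simp add: pairing_J(2) inner_commute)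
    qed
    show "\<eta> \<in> dualK A" using eta antipolar_sub_dualK by blast
    have "pairing \<eta> z0 \<ge> 1" using eta z0 by (simp add: antipolar_iff)
    thus "0 < Jm z0 \<bullet> \<eta>" by (simp add: pairing_J(2) inner_commute)
  qed
  show ?thesis
  proof
    assume ps: "prop_star A"
    hence nex: "\<not> (\<exists>\<xi>\<in>dualK A. \<xi> \<noteq> 0 \<and> (\<exists>z\<in>A. pairing \<xi> z = 0))" using star_iff[OF A] by blast
    obtain u0 u1 where uu: "u0 \<noteq> 0" "u1 \<noteq> 0" "frontier (dualK A) = ray u0 \<union> ray u1"
      using cs.two_rays by (elim exE conjE)
    have inK: "u \<in> dualK A" if "u \<in> {u0, u1}" for u
    proof -
      have "u \<in> ray u" unfolding ray_iff by (intro exI[of _ 1]) simp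
      hence "u \<in> frontier (dualK A)" using uu(3) that by auto
      thus ?thesis using cs.frontier_K by blast
    qed
    show "prop_starstar (antipolar A)"
    proof -
      have "u \<noteq> 0" if "u \<in> {u0, u1}" for u using uu that by auto
      hence sd: "setdist (ray u) (antipolar A) = 0" if "u \<in> {u0, u1}" for u
        using setdist_zero_of_star[OF A inK[OF that] _ nex] that by blast
      show ?thesis unfolding prop_starstar_def CK by (intro exI[of _ u0] exI[of _ u1]) (simp add: uu sd)
    qed
  next
    assume pss: "prop_starstar (antipolar A)"
    then obtain u0 u1 where "u0 \<noteq> 0 \<and> u1 \<noteq> 0 \<and> frontier (dualK A) = ray u0 \<union> ray u1 \<and>
      setdist (ray u0) (antipolar A) = 0 \<and> setdist (ray u1) (antipolar A) = 0"
      unfolding prop_starstar_def CK by (elim exE) (rule that)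
    hence uu: "u0 \<noteq> 0" "u1 \<noteq> 0" "frontier (dualK A) = ray u0 \<union> ray u1"
      "setdist (ray u0) (antipolar A) = 0" "setdist (ray u1) (antipolar A) = 0" by simp_all
    show "prop_star A" unfolding star_iff[OF A]
    proof
      assume "\<exists>\<xi>\<in>dualK A. \<xi> \<noteq> 0 \<and> (\<exists>z\<in>A. pairing \<xi> z = 0)"
      then obtain \<xi> z where xi: "\<xi> \<in> dualK A" "\<xi> \<noteq> 0" and z: "z \<in> A" "pairing \<xi> z = 0" by blast
      have zn: "z \<noteq> 0" using z prop_iD(4)[OF A] by auto
      have "\<xi> \<notin> interior (dualK A)"
      proof (rule not_interior[of "- Jm z"])
        show "- Jm z \<noteq> 0" using zn by simp
        fix \<epsilon> :: real assume ep: "\<epsilon> > 0"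
        have "pairing (\<xi> + \<epsilon> *\<^sub>R - Jm z) z = pairing \<xi> z - \<epsilon> * pairing (Jm z) z"
          by (simp add: pairing_def Jm_def algebra_simps)
        also have "\<dots> = - \<epsilon> * norm z ^ 2" using z(2) pairing_Jself(1)[of z] by simp
        also have "\<dots> < 0" using ep zn by simp
        finally have neg: "pairing (\<xi> + \<epsilon> *\<^sub>R - Jm z) z < 0" .
        show "\<xi> + \<epsilon> *\<^sub>R - Jm z \<notin> dualK A"
        proof
          assume "\<xi> + \<epsilon> *\<^sub>R - Jm z \<in> dualK A"
          hence "pairing (\<xi> + \<epsilon> *\<^sub>R - Jm z) z \<ge> 0" using z(1) unfolding dualK_def by blast
          with neg show False by linarith
        qed
      qed
      hence "\<xi> \<in> frontier (dualK A)" using xi cs.frontier_K by blast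
      hence "\<xi> \<in> ray u0 \<or> \<xi> \<in> ray u1" using uu(3) by simp
      then obtain u where u: "u \<in> {u0, u1}" "\<xi> \<in> ray u" by blast
      then obtain t where t: "t \<ge> 0" "\<xi> = t *\<^sub>R u" by (auto simp: ray_iff)
      have "t \<noteq> 0" using t xi by auto
      hence uz: "pairing u z = 0" using z(2) t by (simp add: pairing_lin)
      have "setdist (ray u) (antipolar A) = 0" using u uu(4,5) by auto
      moreover have "setdist (ray u) (antipolar A) \<ge> 1 / norm z" by (rule setdist_pos_of_touch[OF A z(1) uz])
      moreover have "1 / norm z > 0" using zn by simp
      ultimately show False by simp
    qed
  qed
qed

theorem theorem4:
  fixes \<Omega> :: "(real \<times> real) set"
  assumes "prop_i \<Omega>"
  shows "(prop_star \<Omega> \<longleftrightarrow> prop_starstar (antipolar \<Omega>)) \<and>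
         (prop_star (antipolar \<Omega>) \<longleftrightarrow> prop_starstar \<Omega>)"
proof
  show "prop_star \<Omega> \<longleftrightarrow> prop_starstar (antipolar \<Omega>)" by (rule main[OF assms])
  have "prop_star (antipolar \<Omega>) \<longleftrightarrow> prop_starstar (antipolar (antipolar \<Omega>))"
    by (rule main[OF antipolar_prop_i[OF assms]])
  thus "prop_star (antipolar \<Omega>) \<longleftrightarrow> prop_starstar \<Omega>" using bipolar[OF assms] by simp
qed

end
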